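(* Let $I$ and $J$ be finite sets, $g\in\mathbb{R}^J$, and for each $i\in I$ let $u_i:\mathbb{R}^J\to\mathbb{R}\cup\{-\infty\}$ be upper semicontinuous and concave with $u_i(x_i+rg)>u_i(x_i)$ for all $x_i\in\mathrm{dom}\,u_i$ and $r>0$. Assume: (A) whenever $x\in\mathbb{R}^{I\times J}$ satisfies $u_i^\infty(x_i)\ge0$ for all $i$ and $\sum_{i}x_i=0$, then $x=0$; (B) for every $r>0$ and every $i\in I$ there exists $\delta_i>0$ with $u_i(x_i+rg)\ge u_i(x_i)+\delta_i r$ for all $x_i\in\mathbb{B}(r)$. Let $x^0\in\mathbb{R}^{I\times J}$ be an initial allocation and let $(x^t)_{t\ge0}$ be generated by repeated double auctions: for $t\ge1$, with $D^t_i(y_i):=\sup\{r\in\mathbb{R}\mid u_i(x^{t-1}_i+y_i-rg)\ge u_i(x^{t-1}_i)\}$, let $\bar x^t\in\mathbb{R}^{I\times J}$ solve "maximize $\sum_i D^t_i(y_i)$ subject to $\sum_i y_i=0$", let $p^t\in\mathbb{R}^J$ satisfy $p^t\in\partial D^t_i(\bar x^t_i)$ for all $i\in I$, and set $x^t_i:=x^{t-1}_i+\bar x^t_i-(p^t\cdot\bar x^t_i)g$. Then: the sequence $(x^t)$ is bounded; $CS(x^t)$ is nonincreasing in $t$ and converges to zero; there is $r>0$ such that, with $\delta_i$ the constants given by (B) for this $r$, \[ CS(x^t)\le\frac1t\sum_{i\in I}\frac{u_i(x^t_i)-u_i(x^0_i)}{\delta_i}\quad\text{for all }t\ge1; \]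 and every cluster point $\bar x$ of $(x^t)_{t=0}^\infty$ is a double auction equilibrium and individually rational. If moreover each $u_i$ satisfies: whenever $u_i(y_i)>u_i(y_i')$ for some $y_i'\in\mathrm{dom}\,u_i$, then $y_i-\varepsilon g\in\mathrm{dom}\,u_i$ for all small enough $\varepsilon>0$, then every such cluster point $\bar x$ is Pareto efficient.
   Context: $\mathrm{dom}\,u_i=\{x\mid u_i(x)>-\infty\}$; $u_i^\infty(x_i):=\inf_{\alpha>0}\frac{u_i(\bar x_i+\alpha x_i)-u_i(\bar x_i)}{\alpha}$ for any $\bar x_i\in\mathrm{dom}\,u_i$ is the recession function; $\mathbb{B}(r)$ is the closed ball of radius $r$ at the origin in $\mathbb{R}^J$; $\partial D(\bar y)$ is the superdifferential $\{p\mid D(y)\le D(\bar y)+p\cdot(y-\bar y)\ \forall y\}$. For an allocation $x$, $CS(x)$ is the optimal value of "maximize $\sum_i D_i(y_i)$ over $y\in\mathbb{R}^{I\times J}$ subject to $\sum_i y_i=0$" where $D_i(y_i)=\sup\{r\mid u_i(x_i+y_i-rg)\ge u_i(x_i)\}$; $x$ is a double auction equilibrium if $CS(x)=0$. An allocation $\bar x$ is individually rational if $u_i(\bar x_i)\ge u_i(x^0_i)$ for all $i$. An allocation is feasible if its total equals $\sum_i x^0_i$, and a feasible $\bar x$ is Pareto efficient if no feasible $x'$ has $u_i(x'_i)\ge u_i(\bar x_i)$ for all $i$ with strict inequality for some $i$. *)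

theory Defs
  imports "HOL-Analysis.Analysis"
begin

text \<open>Utilities take values in the extended reals; the value \<open>-\<infinity>\<close> is allowed,
  \<open>+\<infinity>\<close> is excluded by an explicit hypothesis in the theorem.\<close>

definition usc :: "('a::topological_space \<Rightarrow> ereal) \<Rightarrow> bool" where
  "usc f \<longleftrightarrow> (\<forall>x. Limsup (at x) f \<le> f x)"

definition ext_concave :: "('a::real_vector \<Rightarrow> ereal) \<Rightarrow> bool" where
  "ext_concave f \<longleftrightarrow> (\<forall>x y (l::real). 0 < l \<and> l < 1 \<longrightarrow>
      ereal l * f x + ereal (1 - l) * f y \<le> f (l *\<^sub>R x + (1 - l) *\<^sub>R y))"

definition edom :: "('a \<Rightarrow> ereal) \<Rightarrow> 'a set" where
  "edom f = {x. f x > -\<infinity>}"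

definition recession :: "('a::real_vector \<Rightarrow> ereal) \<Rightarrow> 'a \<Rightarrow> ereal" where
  "recession f x = (let xb = (SOME xb. xb \<in> edom f) in
      (INF \<alpha>\<in>{\<alpha>::real. \<alpha> > 0}. (f (xb + \<alpha> *\<^sub>R x) - f xb) / ereal \<alpha>))"

definition Dfun :: "'a::real_vector \<Rightarrow> ('a \<Rightarrow> ereal) \<Rightarrow> 'a \<Rightarrow> 'a \<Rightarrow> ereal" where
  "Dfun g f xi yi = Sup {ereal r | r. f (xi + yi - r *\<^sub>R g) \<ge> f xi}"

definition superdiff :: "('a::real_inner \<Rightarrow> ereal) \<Rightarrow> 'a \<Rightarrow> 'a set" where
  "superdiff D yb = {p. \<forall>y. D y \<le> D yb + ereal (p \<bullet> (y - yb))}"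

text \<open>Allocations are elements of \<open>real^'j^'i\<close>, agent \<open>i\<close> holding \<open>x $ i\<close>.\<close>
definition CS :: "real^'j \<Rightarrow> ('i::finite \<Rightarrow> real^'j \<Rightarrow> ereal) \<Rightarrow> real^'j^'i \<Rightarrow> ereal" where
  "CS g u x = Sup {(\<Sum>i\<in>UNIV. Dfun g (u i) (x $ i) (y $ i)) | y::real^'j^'i. (\<Sum>i\<in>UNIV. y $ i) = 0}"

definition DA_equilibrium :: "real^'j \<Rightarrow> ('i::finite \<Rightarrow> real^'j \<Rightarrow> ereal) \<Rightarrow> real^'j^'i \<Rightarrow> bool" where
  "DA_equilibrium g u x \<longleftrightarrow> CS g u x = 0"

definition indiv_rational :: "('i::finite \<Rightarrow> real^'j \<Rightarrow> ereal) \<Rightarrow> real^'j^'i \<Rightarrow> real^'j^'i \<Rightarrow> bool" where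
  "indiv_rational u x0 xb \<longleftrightarrow> (\<forall>i. u i (xb $ i) \<ge> u i (x0 $ i))"

definition feasible :: "real^'j^'i::finite \<Rightarrow> real^'j^'i \<Rightarrow> bool" where
  "feasible x0 x \<longleftrightarrow> (\<Sum>i\<in>UNIV. x $ i) = (\<Sum>i\<in>UNIV. x0 $ i)"

definition pareto_efficient :: "('i::finite \<Rightarrow> real^'j \<Rightarrow> ereal) \<Rightarrow> real^'j^'i \<Rightarrow> real^'j^'i \<Rightarrow> bool" where
  "pareto_efficient u x0 xb \<longleftrightarrow> feasible x0 xb \<and>
     \<not> (\<exists>x'. feasible x0 x' \<and> (\<forall>i. u i (x' $ i) \<ge> u i (xb $ i)) \<and> (\<exists>i. u i (x' $ i) > u i (xb $ i)))"

end

theory Submission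
  imports Defs
begin
lemma usc_open:
  assumes "usc f" "f z < c"
  shows "\<exists>S. open S \<and> z \<in> S \<and> (\<forall>y\<in>S. f y < c)"
proof -
  have "Limsup (at z) f < c" using assms unfolding usc_def by (meson le_less_trans)
  hence "eventually (\<lambda>y. f y < c) (at z)" by (rule Limsup_lessD)
  then obtain S where "open S" "z \<in> S" "\<forall>y\<in>S. y \<noteq> z \<longrightarrow> f y < c"
    by (auto simp: eventually_at_topological)
  thus ?thesis using assms(2) by (intro exI[of _ S]) auto
qed

lemma usc_closed:
  assumes "usc f"
  shows "closed {y. c \<le> f y}"
  unfolding closed_def
proof (subst open_subopen, intro ballI)
  fix z assume "z \<in> - {y. c \<le> f y}"
  hence "f z < c" by auto
  then obtain S where "open S" "z \<in> S" "\<forall>y\<in>S. f y < c" using usc_open[OF assms] by blast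
  thus "\<exists>T. open T \<and> z \<in> T \<and> T \<subseteq> - {y. c \<le> f y}" by (intro exI[of _ S]) auto
qed

lemma usc_seq:
  assumes "usc f" "z \<longlonglongrightarrow> l" "eventually (\<lambda>n. c \<le> f (z n)) sequentially"
  shows "c \<le> f l"
proof -
  have "l \<in> {y. c \<le> f y}"
    by (rule Lim_in_closed_set[OF usc_closed[OF assms(1)] _ _ assms(2)]) (use assms(3) in auto)
  thus ?thesis by simp
qed

lemma conc_real:
  assumes "ext_concave f" "f a = ereal A" "f b = ereal B" "0 < l" "l < 1"
  shows "ereal (l * A + (1 - l) * B) \<le> f (l *\<^sub>R a + (1 - l) *\<^sub>R b)"
proof -
  have "ereal l * f a + ereal (1-l) * f b \<le> f (l *\<^sub>R a + (1 - l) *\<^sub>R b)"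
    using assms(1,4,5) unfolding ext_concave_def by blast
  thus ?thesis using assms(2,3) by simp
qed

lemma mono_le:
  fixes f :: "'a::real_vector \<Rightarrow> ereal"
  assumes mono: "\<And>z r. z \<in> edom f \<Longrightarrow> r > 0 \<Longrightarrow> f z < f (z + r *\<^sub>R g)"
    and "c \<le> f z" "c \<noteq> -\<infinity>" "0 \<le> r"
  shows "c \<le> f (z + r *\<^sub>R g)"
proof (cases "r = 0")
  case True
  then show ?thesis using assms(2) by simp
next
  case False
  have "-\<infinity> < c" using assms(3) by (cases c) auto
  hence "-\<infinity> < f z" using assms(2) by (rule less_le_trans)
  hence "z \<in> edom f" unfolding edom_def by simp
  moreover have "0 < r" using False assms(4) by simp
  ultimately have "f z < f (z + r *\<^sub>R g)" by (rule mono)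
  thus ?thesis using assms(2) by simp
qed
lemma D0: "0 \<le> Dfun g f xi 0"
  unfolding Dfun_def by (rule Sup_upper) (auto intro!: exI[of _ 0])

lemma D_attain:
  fixes f :: "'a::real_normed_vector \<Rightarrow> ereal"
  assumes usc: "usc f" and mono: "\<And>z r. z \<in> edom f \<Longrightarrow> r > 0 \<Longrightarrow> f z < f (z + r *\<^sub>R g)"
    and dom: "xi \<in> edom f" and le: "ereal r \<le> Dfun g f xi yi"
  shows "f xi \<le> f (xi + yi - r *\<^sub>R g)"
proof -
  have cn: "f xi \<noteq> -\<infinity>" using dom unfolding edom_def by auto
  have step: "f xi \<le> f (xi + yi - (r - inverse (real (Suc n))) *\<^sub>R g)" for n
  proof -
    have "ereal (r - inverse (real (Suc n))) < ereal r" by simp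
    also note le
    finally obtain s where s: "s \<in> {ereal r | r. f (xi + yi - r *\<^sub>R g) \<ge> f xi}"
      "ereal (r - inverse (real (Suc n))) < s"
      unfolding Dfun_def less_Sup_iff by blast
    then obtain s' where s': "s = ereal s'" "f xi \<le> f (xi + yi - s' *\<^sub>R g)" by auto
    have "f xi \<le> f ((xi + yi - s' *\<^sub>R g) + (s' - (r - inverse (real (Suc n)))) *\<^sub>R g)"
      by (rule mono_le[OF mono s'(2) cn]) (use s s' in auto)
    also have "(xi + yi - s' *\<^sub>R g) + (s' - (r - inverse (real (Suc n)))) *\<^sub>R g
       = xi + yi - (r - inverse (real (Suc n))) *\<^sub>R g" by (simp add: algebra_simps)
    finally show ?thesis .
  qed
  have "(\<lambda>n. xi + yi - (r - inverse (real (Suc n))) *\<^sub>R g) \<longlonglongrightarrow> xi + yi - (r - 0) *\<^sub>R g"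
    by (intro tendsto_intros LIMSEQ_inverse_real_of_nat)
  from usc_seq[OF usc this] step show ?thesis by simp
qed


lemma D_fin:
  fixes f :: "'a::real_normed_vector \<Rightarrow> ereal"
  assumes conc: "ext_concave f" and mono: "\<And>z r. z \<in> edom f \<Longrightarrow> r > 0 \<Longrightarrow> f z < f (z + r *\<^sub>R g)"
    and npinf: "\<And>z. f z \<noteq> \<infinity>" and dom: "xi \<in> edom f"
  shows "Dfun g f xi yi < \<infinity>"
proof (rule ccontr)
  assume "\<not> Dfun g f xi yi < \<infinity>"
  hence inf: "Dfun g f xi yi = \<infinity>" by simp
  define a where "a = xi + yi"
  obtain C where C: "f xi = ereal C" using dom npinf[of xi] unfolding edom_def by (cases "f xi") auto
  have cn: "f xi \<noteq> -\<infinity>" using C by simp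
  have all: "f xi \<le> f (a - R *\<^sub>R g)" for R
  proof -
    have "ereal R < Dfun g f xi yi" using inf by simp
    then obtain s where s: "s \<in> {ereal r | r. f (xi + yi - r *\<^sub>R g) \<ge> f xi}" "ereal R < s"
      unfolding Dfun_def less_Sup_iff by blast
    then obtain s' where s': "s = ereal s'" "f xi \<le> f (a - s' *\<^sub>R g)" unfolding a_def by auto
    have "f xi \<le> f ((a - s' *\<^sub>R g) + (s' - R) *\<^sub>R g)"
      by (rule mono_le[OF mono s'(2) cn]) (use s s' in auto)
    also have "(a - s' *\<^sub>R g) + (s' - R) *\<^sub>R g = a - R *\<^sub>R g" by (simp add: algebra_simps)
    finally show ?thesis .
  qed
  have fin: "\<exists>H. f (a - R *\<^sub>R g) = ereal H \<and> C \<le> H" for R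
  proof -
    have "ereal C \<le> f (a - R *\<^sub>R g)" using all[of R] C by simp
    moreover have "f (a - R *\<^sub>R g) \<noteq> \<infinity>" by (rule npinf)
    ultimately show ?thesis by (cases "f (a - R *\<^sub>R g)") auto
  qed
  obtain H0 where H0: "f (a - 0 *\<^sub>R g) = ereal H0" "C \<le> H0" using fin by blast
  obtain H1 where H1: "f (a - 1 *\<^sub>R g) = ereal H1" "C \<le> H1" using fin by blast
  have "a - 1 *\<^sub>R g \<in> edom f" using H1 unfolding edom_def by simp
  from mono[OF this, of 1] have "f (a - 1 *\<^sub>R g) < f (a - 0 *\<^sub>R g)" by simp
  hence lt: "H1 < H0" using H0 H1 by simp
  define k where "k = max 2 ((H0 - C) / (H0 - H1) + 1)"
  have k2: "k \<ge> 2" unfolding k_def by simp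
  have kbig: "(H0 - C) / (H0 - H1) < k" unfolding k_def by linarith
  hence kbig2: "H0 - C < k * (H0 - H1)" using lt by (simp add: divide_less_eq)
  obtain Hk where Hk: "f (a - k *\<^sub>R g) = ereal Hk" "C \<le> Hk" using fin by blast
  have "ereal ((1/k) * Hk + (1 - 1/k) * H0) \<le> f ((1/k) *\<^sub>R (a - k *\<^sub>R g) + (1 - 1/k) *\<^sub>R (a - 0 *\<^sub>R g))"
    by (rule conc_real[OF conc Hk(1) H0(1)]) (use k2 in auto)
  also have "(1/k) *\<^sub>R (a - k *\<^sub>R g) + (1 - 1/k) *\<^sub>R (a - 0 *\<^sub>R g) = a - 1 *\<^sub>R g"
    using k2 by (simp add: algebra_simps)
  finally have "(1/k) * Hk + (1 - 1/k) * H0 \<le> H1" using H1 by simp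
  hence "Hk + (k - 1) * H0 \<le> k * H1" using k2 by (simp add: field_simps)
  hence "Hk \<le> H0 - k * (H0 - H1)" by (simp add: algebra_simps)
  thus False using kbig2 Hk(2) by linarith
qed


lemma fin_of_ge:
  assumes "ereal C \<le> v" "v \<noteq> \<infinity>"
  shows "\<exists>V. v = ereal V \<and> C \<le> V"
  using assms by (cases v) auto

lemma rec_base:
  fixes f :: "'a::real_normed_vector \<Rightarrow> ereal"
  assumes conc: "ext_concave f" and usc: "usc f" and npinf: "\<And>z. f z \<noteq> \<infinity>"
    and a: "a \<in> edom f" and b: "b \<in> edom f"
    and ray: "\<And>\<alpha>. \<alpha> > 0 \<Longrightarrow> f a \<le> f (a + \<alpha> *\<^sub>R d)"
    and al: "\<alpha> > 0"
  shows "f b \<le> f (b + \<alpha> *\<^sub>R d)"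
proof -
  obtain A where A: "f a = ereal A" using a npinf[of a] unfolding edom_def by (cases "f a") auto
  obtain B where B: "f b = ereal B" using b npinf[of b] unfolding edom_def by (cases "f b") auto
  define lam where "lam n = inverse (real (Suc (Suc n)))" for n
  have lam0: "0 < lam n" "lam n < 1" for n unfolding lam_def by (auto simp: field_simps)
  have lamlim: "lam \<longlonglongrightarrow> 0" unfolding lam_def
    by (rule LIMSEQ_Suc[OF LIMSEQ_inverse_real_of_nat])
  define P where "P n = lam n *\<^sub>R (a + (\<alpha> / lam n) *\<^sub>R d) + (1 - lam n) *\<^sub>R b" for n
  have P_eq: "P n = lam n *\<^sub>R a + (1 - lam n) *\<^sub>R b + \<alpha> *\<^sub>R d" for n
    using lam0[of n] unfolding P_def by (simp add: algebra_simps)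
  have Plim: "P \<longlonglongrightarrow> 0 *\<^sub>R a + (1 - 0) *\<^sub>R b + \<alpha> *\<^sub>R d"
    unfolding P_eq[abs_def] by (intro tendsto_intros lamlim)
  have Pval: "ereal (lam n * A + (1 - lam n) * B) \<le> f (P n)" for n
  proof -
    have "ereal A \<le> f (a + (\<alpha> / lam n) *\<^sub>R d)" using ray[of "\<alpha> / lam n"] A al lam0[of n] by simp
    then obtain Q where Q: "f (a + (\<alpha> / lam n) *\<^sub>R d) = ereal Q" "A \<le> Q" using fin_of_ge npinf by blast
    have "ereal (lam n * Q + (1 - lam n) * B) \<le> f (P n)"
      unfolding P_def by (rule conc_real[OF conc Q(1) B lam0])
    moreover have "lam n * A \<le> lam n * Q" using Q(2) lam0[of n] by simp
    ultimately show ?thesis by (meson ereal_less_eq(3) add_right_mono order_trans)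
  qed
  show ?thesis
  proof (rule dense_le)
    fix c assume c: "c < f b"
    show "c \<le> f (b + \<alpha> *\<^sub>R d)"
    proof (cases c)
      case (real c')
      have c'B: "c' < B" using c B real by simp
      have "(\<lambda>n. lam n * \<bar>B - A\<bar>) \<longlonglongrightarrow> 0 * \<bar>B - A\<bar>" by (intro tendsto_intros lamlim)
      hence "eventually (\<lambda>n. lam n * \<bar>B - A\<bar> < B - c') sequentially"
        using c'B by (intro order_tendstoD) auto
      hence ev: "eventually (\<lambda>n. c \<le> f (P n)) sequentially"
      proof (rule eventually_mono)
        fix n assume h: "lam n * \<bar>B - A\<bar> < B - c'"
        have "lam n * (B - A) \<le> lam n * \<bar>B - A\<bar>" using lam0[of n] by (intro mult_left_mono) auto
        hence "c' \<le> lam n * A + (1 - lam n) * B" using h by (simp add: algebra_simps)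
        hence "ereal c' \<le> ereal (lam n * A + (1 - lam n) * B)" by simp
        thus "c \<le> f (P n)" using Pval[of n] real by (meson order_trans)
      qed
      from usc_seq[OF usc Plim ev] show ?thesis by simp
    qed (use c in auto)
  qed
qed

lemma rec_nonneg:
  fixes f :: "'a::real_normed_vector \<Rightarrow> ereal"
  assumes conc: "ext_concave f" and usc: "usc f" and npinf: "\<And>z. f z \<noteq> \<infinity>"
    and a: "a \<in> edom f"
    and ray: "\<And>\<alpha>. \<alpha> > 0 \<Longrightarrow> f a \<le> f (a + \<alpha> *\<^sub>R d)"
  shows "0 \<le> recession f d"
proof -
  define xb where "xb = (SOME xb. xb \<in> edom f)"
  have xb: "xb \<in> edom f" unfolding xb_def using a by (rule someI)
  obtain B where B: "f xb = ereal B" using xb npinf[of xb] unfolding edom_def by (cases "f xb") auto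
  have "0 \<le> (f (xb + \<alpha> *\<^sub>R d) - f xb) / ereal \<alpha>" if al: "\<alpha> > 0" for \<alpha>
  proof -
    have "ereal B \<le> f (xb + \<alpha> *\<^sub>R d)" using rec_base[OF conc usc npinf a xb ray al] B by simp
    then obtain Q where Q: "f (xb + \<alpha> *\<^sub>R d) = ereal Q" "B \<le> Q" using fin_of_ge npinf by blast
    show ?thesis using Q B al by simp
  qed
  thus ?thesis unfolding recession_def Let_def xb_def[symmetric] by (auto intro!: INF_greatest)
qed


lemma bounded_level:
  fixes u :: "'i::finite \<Rightarrow> real^'j \<Rightarrow> ereal" and x0 :: "real^'j^'i"
  assumes conc: "\<And>i. ext_concave (u i)" and usc: "\<And>i. usc (u i)"
    and npinf: "\<And>i z. u i z \<noteq> \<infinity>" and dom: "\<And>i. x0 $ i \<in> edom (u i)"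
    and A: "\<And>y::real^'j^'i. (\<forall>i. recession (u i) (y $ i) \<ge> 0) \<Longrightarrow> (\<Sum>i\<in>UNIV. y $ i) = 0 \<Longrightarrow> y = 0"
  shows "bounded {x. (\<Sum>i\<in>UNIV. x $ i) = (\<Sum>i\<in>UNIV. x0 $ i) \<and> (\<forall>i. u i (x0 $ i) \<le> u i (x $ i))}"
    (is "bounded ?S")
proof (rule ccontr)
  assume nb: "\<not> bounded ?S"
  have "\<exists>z\<in>?S. real (Suc n) < dist x0 z" for n
    using nb unfolding bounded_any_center[of _ x0] by (meson not_le)
  hence "\<forall>n. \<exists>z. z \<in> ?S \<and> real (Suc n) < dist x0 z" by blast
  then obtain z where z': "\<forall>n. z n \<in> ?S \<and> real (Suc n) < dist x0 (z n)" by (auto dest!: choice)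
  hence z: "\<And>n. z n \<in> ?S" "\<And>n. real (Suc n) < dist x0 (z n)" by auto
  define N where "N n = norm (z n - x0)" for n
  have N: "real (Suc n) < N n" for n using z(2)[of n] unfolding N_def by (simp add: dist_norm norm_minus_commute)
  have Npos: "0 < N n" for n using N[of n] by (metis of_nat_0_less_iff zero_less_Suc order_less_trans)
  define dd where "dd n = (1 / N n) *\<^sub>R (z n - x0)" for n
  have dds: "dd n \<in> sphere 0 1" for n using Npos[of n] unfolding dd_def N_def by simp
  obtain d \<phi> where d: "d \<in> sphere 0 1" "strict_mono (\<phi> :: nat \<Rightarrow> nat)" "(dd \<circ> \<phi>) \<longlonglongrightarrow> d"
    using seq_compactE[OF compact_imp_seq_compact[OF compact_sphere[of "0::real^'j^'i" 1]], of dd] dds by blast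
  have sumdd: "(\<Sum>i\<in>UNIV. dd n $ i) = 0" for n
  proof -
    have "(\<Sum>i\<in>UNIV. dd n $ i) = (1 / N n) *\<^sub>R ((\<Sum>i\<in>UNIV. z n $ i) - (\<Sum>i\<in>UNIV. x0 $ i))"
      unfolding dd_def by (simp add: scaleR_sum_right[symmetric] sum_subtractf[symmetric])
    thus ?thesis using z(1)[of n] by simp
  qed
  have "(\<lambda>n. \<Sum>i\<in>UNIV. (dd \<circ> \<phi>) n $ i) \<longlonglongrightarrow> (\<Sum>i\<in>UNIV. d $ i)"
    by (intro tendsto_intros d(3))
  hence sumd: "(\<Sum>i\<in>UNIV. d $ i) = 0" using sumdd by (simp add: o_def LIMSEQ_const_iff)
  have ray: "u i (x0 $ i) \<le> u i (x0 $ i + \<alpha> *\<^sub>R d $ i)" if al: "\<alpha> > 0" for i \<alpha>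
  proof -
    obtain X where X: "u i (x0 $ i) = ereal X" using dom[of i] npinf[of i "x0 $ i"] unfolding edom_def
      by (cases "u i (x0 $ i)") auto
    have lim: "(\<lambda>n. x0 $ i + \<alpha> *\<^sub>R (dd \<circ> \<phi>) n $ i) \<longlonglongrightarrow> x0 $ i + \<alpha> *\<^sub>R d $ i"
      by (intro tendsto_intros d(3))
    have ev: "eventually (\<lambda>n. u i (x0 $ i) \<le> u i (x0 $ i + \<alpha> *\<^sub>R (dd \<circ> \<phi>) n $ i)) sequentially"
    proof -
      obtain n0 where "\<alpha> < real n0" using reals_Archimedean2[of \<alpha>] by blast
      hence n0: "\<alpha> < real (Suc n0)" by simp
      have "u i (x0 $ i) \<le> u i (x0 $ i + \<alpha> *\<^sub>R (dd \<circ> \<phi>) n $ i)" if "n \<ge> n0" for n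
      proof -
        define m where "m = \<phi> n"
        have "n \<le> \<phi> n" using d(2) by (rule strict_mono_imp_increasing)
        hence "real (Suc n0) \<le> real (Suc m)" using that unfolding m_def by simp
        hence "\<alpha> < N m" using n0 N[of m] by linarith
        define l where "l = \<alpha> / N m"
        have l: "0 < l" "l < 1" unfolding l_def using al \<open>\<alpha> < N m\<close> Npos[of m] by auto
        have "ereal X \<le> u i (z m $ i)" using z(1)[of m] X by (metis (mono_tags, lifting) mem_Collect_eq)
        then obtain Z where Z: "u i (z m $ i) = ereal Z" "X \<le> Z" using fin_of_ge npinf by blast
        have "ereal (l * Z + (1 - l) * X) \<le> u i (l *\<^sub>R z m $ i + (1 - l) *\<^sub>R x0 $ i)"
          by (rule conc_real[OF conc Z(1) X l])
        also have "l *\<^sub>R z m $ i + (1 - l) *\<^sub>R x0 $ i = x0 $ i + \<alpha> *\<^sub>R (dd \<circ> \<phi>) n $ i"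
          unfolding dd_def m_def[symmetric] l_def o_def by (simp add: algebra_simps)
        finally have "ereal (l * Z + (1 - l) * X) \<le> u i (x0 $ i + \<alpha> *\<^sub>R (dd \<circ> \<phi>) n $ i)" .
        moreover have "l * X \<le> l * Z" using Z(2) l by (intro mult_left_mono) auto
        hence "X \<le> l * Z + (1 - l) * X" by (simp add: algebra_simps)
        moreover have "ereal X \<le> ereal (l * Z + (1 - l) * X)" using calculation(2) by simp
        ultimately show ?thesis using X by (metis order_trans)
      qed
      thus ?thesis unfolding eventually_sequentially by blast
    qed
    show ?thesis by (rule usc_seq[OF usc lim ev])
  qed
  have "\<forall>i. recession (u i) (d $ i) \<ge> 0"
    using rec_nonneg[OF conc usc npinf dom ray] by blast
  from A[OF this sumd] have "d = 0" .
  thus False using d(1) by simp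
qed


lemma gain:
  fixes f :: "'a::real_normed_vector \<Rightarrow> ereal"
  assumes conc: "ext_concave f" and npinf: "\<And>z. f z \<noteq> \<infinity>"
    and Bf: "\<forall>z\<in>cball 0 r. f z + ereal (\<delta> * r) \<le> f (z + r *\<^sub>R g)"
    and w: "norm w \<le> r" "w \<in> edom f" and s: "0 \<le> s" "s \<le> r" and dpos: "0 < \<delta>"
  shows "f w + ereal (\<delta> * s) \<le> f (w + s *\<^sub>R g)"
proof -
  obtain W where W: "f w = ereal W" using w(2) npinf[of w] unfolding edom_def by (cases "f w") auto
  have wr: "f w + ereal (\<delta> * r) \<le> f (w + r *\<^sub>R g)" using Bf w(1) by auto
  show ?thesis
  proof (cases "s = 0")
    case True thus ?thesis using W by simp
  next
    case s0: False
    show ?thesis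
    proof (cases "s = r")
      case True thus ?thesis using wr by simp
    next
      case False
      have "ereal (W + \<delta> * r) \<le> f (w + r *\<^sub>R g)" using wr W by simp
      then obtain R where R: "f (w + r *\<^sub>R g) = ereal R" "W + \<delta> * r \<le> R" using fin_of_ge npinf by blast
      define l where "l = s / r"
      have rpos: "0 < r" using s s0 by simp
      have l: "0 < l" "l < 1" unfolding l_def using s s0 False rpos by (auto simp: field_simps)
      have "ereal (l * R + (1 - l) * W) \<le> f (l *\<^sub>R (w + r *\<^sub>R g) + (1 - l) *\<^sub>R w)"
        by (rule conc_real[OF conc R(1) W l])
      also have "l *\<^sub>R (w + r *\<^sub>R g) + (1 - l) *\<^sub>R w = w + s *\<^sub>R g"
        unfolding l_def using rpos by (simp add: algebra_simps)
      finally have *: "ereal (l * R + (1 - l) * W) \<le> f (w + s *\<^sub>R g)" .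
      have "l * (W + \<delta> * r) \<le> l * R" using R(2) l by (intro mult_left_mono) auto
      moreover have lr: "l * r = s" unfolding l_def using rpos by simp
      ultimately have "l * W + \<delta> * s \<le> l * R" by (simp add: algebra_simps)
      hence "W + \<delta> * s \<le> l * R + (1 - l) * W" by (simp add: algebra_simps)
      hence "ereal (W + \<delta> * s) \<le> ereal (l * R + (1 - l) * W)" by simp
      hence "ereal (W + \<delta> * s) \<le> f (w + s *\<^sub>R g)" using * by (rule order_trans)
      thus ?thesis using W by simp
    qed
  qed
qed

lemma usc_bdd:
  assumes usc: "usc f" and npinf: "\<And>z. f z \<noteq> \<infinity>" and K: "compact K"
  shows "\<exists>M. \<forall>z\<in>K. f z \<le> ereal M"
proof -
  have cov: "K \<subseteq> (\<Union>n\<in>UNIV::nat set. {z. f z < ereal (real n)})"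
  proof
    fix z assume "z \<in> K"
    have "\<exists>n::nat. f z < ereal (real n)"
    proof (cases "f z")
      case (real r)
      obtain n :: nat where "r < real n" using reals_Archimedean2 by blast
      thus ?thesis using real by auto
    next
      case PInf thus ?thesis using npinf[of z] by simp
    next
      case MInf thus ?thesis by (intro exI[of _ 0]) simp
    qed
    thus "z \<in> (\<Union>n::nat. {z. f z < ereal (real n)})" by blast
  qed
  have op: "open {z. f z < ereal (real n)}" if "n \<in> UNIV" for n
  proof -
    have "{z. f z < ereal (real n)} = - {z. ereal (real n) \<le> f z}" by auto
    thus ?thesis using usc_closed[OF usc] by (simp add: open_Compl)
  qed
  obtain C where C: "C \<subseteq> UNIV" "finite C" "K \<subseteq> (\<Union>n\<in>C. {z. f z < ereal (real n)})"
    by (rule compactE_image[OF K op cov])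
  show ?thesis
  proof (intro exI[of _ "real (Max (insert 0 C))"] ballI)
    fix z assume "z \<in> K"
    then obtain n where n: "n \<in> C" "f z < ereal (real n)" using C(3) by (auto simp: subset_iff)
    have "n \<le> Max (insert 0 C)" using n C by simp
    hence "ereal (real n) \<le> ereal (real (Max (insert 0 C)))" by simp
    thus "f z \<le> ereal (real (Max (insert 0 C)))" using n(2) by (meson less_imp_le order_trans)
  qed
qed


locale DA =
  fixes g :: "real^'j::finite"
    and u :: "'i::finite \<Rightarrow> real^'j \<Rightarrow> ereal"
    and x xbar :: "nat \<Rightarrow> real^'j^'i"
    and p :: "nat \<Rightarrow> real^'j"
  assumes not_pinf: "\<And>i z. u i z \<noteq> \<infinity>"
    and usc: "\<And>i. usc (u i)"
    and concave: "\<And>i. ext_concave (u i)"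
    and mono_g: "\<And>i z r. z \<in> edom (u i) \<Longrightarrow> r > 0 \<Longrightarrow> u i (z + r *\<^sub>R g) > u i z"
    and A: "\<And>y::real^'j^'i. (\<forall>i. recession (u i) (y $ i) \<ge> 0) \<Longrightarrow> (\<Sum>i\<in>UNIV. y $ i) = 0 \<Longrightarrow> y = 0"
    and B: "\<And>r i. r > 0 \<Longrightarrow> \<exists>\<delta>>0. \<forall>z\<in>cball 0 r.
              u i (z + r *\<^sub>R g) \<ge> u i z + ereal (\<delta> * r)"
    and x0_dom: "\<And>i. x 0 $ i \<in> edom (u i)"
    and xbar_feas: "\<And>t. t \<ge> 1 \<Longrightarrow> (\<Sum>i\<in>UNIV. xbar t $ i) = 0"
    and xbar_opt: "\<And>t y. t \<ge> 1 \<Longrightarrow> (\<Sum>i\<in>UNIV. y $ i) = 0 \<Longrightarrow>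
              (\<Sum>i\<in>UNIV. Dfun g (u i) (x (t - 1) $ i) (y $ i))
                \<le> (\<Sum>i\<in>UNIV. Dfun g (u i) (x (t - 1) $ i) (xbar t $ i))"
    and price: "\<And>t i. t \<ge> 1 \<Longrightarrow> p t \<in> superdiff (Dfun g (u i) (x (t - 1) $ i)) (xbar t $ i)"
    and update: "\<And>t i. t \<ge> 1 \<Longrightarrow>
              x t $ i = x (t - 1) $ i + xbar t $ i - (p t \<bullet> xbar t $ i) *\<^sub>R g"
begin

abbreviation "D t i \<equiv> Dfun g (u i) (x t $ i)"
abbreviation "xb t i \<equiv> xbar (Suc t) $ i"
abbreviation "q t i \<equiv> p (Suc t) \<bullet> xbar (Suc t) $ i"

lemma mono': "z \<in> edom (u i) \<Longrightarrow> r > 0 \<Longrightarrow> u i z < u i (z + r *\<^sub>R g)"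
  using mono_g by blast

lemma upd: "x (Suc t) $ i = x t $ i + xb t i - q t i *\<^sub>R g"
  using update[of "Suc t" i] by simp

lemma price_le: "ereal (q t i) \<le> D t i (xb t i)"
proof -
  have "p (Suc t) \<in> superdiff (D t i) (xb t i)" using price[of "Suc t" i] by simp
  hence "D t i 0 \<le> D t i (xb t i) + ereal (p (Suc t) \<bullet> (0 - xb t i))"
    unfolding superdiff_def by blast
  hence le: "0 \<le> D t i (xb t i) + ereal (- q t i)" using D0[of g "u i" "x t $ i"] by simp
  show ?thesis
  proof (cases "D t i (xb t i)")
    case (real e) thus ?thesis using le by simp
  next
    case MInf thus ?thesis using le by simp
  qed simp
qed

lemma dom_x: "x t $ i \<in> edom (u i)"
proof (induction t)
  case 0 thus ?case by (rule x0_dom)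
next
  case (Suc t)
  have "u i (x t $ i) \<le> u i (x t $ i + xb t i - q t i *\<^sub>R g)"
    by (rule D_attain[OF usc mono' Suc price_le])
  hence "u i (x t $ i) \<le> u i (x (Suc t) $ i)" using upd by simp
  thus ?case using Suc unfolding edom_def by (meson mem_Collect_eq order_less_le_trans)
qed

lemma u_step: "u i (x t $ i) \<le> u i (x (Suc t) $ i)"
proof -
  have "u i (x t $ i) \<le> u i (x t $ i + xb t i - q t i *\<^sub>R g)"
    by (rule D_attain[OF usc mono' dom_x price_le])
  thus ?thesis using upd by simp
qed

lemma u_mono: "s \<le> t \<Longrightarrow> u i (x s $ i) \<le> u i (x t $ i)"
  using lift_Suc_mono_le[of "\<lambda>t. u i (x t $ i)"] u_step by blast

lemma sum_x: "(\<Sum>i\<in>UNIV. x t $ i) = (\<Sum>i\<in>UNIV. x 0 $ i)"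
proof (induction t)
  case (Suc t)
  have "(\<Sum>i\<in>UNIV. x (Suc t) $ i) = (\<Sum>i\<in>UNIV. x t $ i) + (\<Sum>i\<in>UNIV. xb t i) - (\<Sum>i\<in>UNIV. q t i) *\<^sub>R g"
    unfolding upd by (simp add: sum.distrib sum_subtractf scaleR_sum_left)
  also have "(\<Sum>i\<in>UNIV. q t i) = p (Suc t) \<bullet> (\<Sum>i\<in>UNIV. xb t i)" by (simp add: inner_sum_right)
  also have "(\<Sum>i\<in>UNIV. xb t i) = 0" using xbar_feas[of "Suc t"] by simp
  finally show ?case using Suc by simp
qed simp

lemma bounded_x: "bounded (range x)"
proof -
  have "range x \<subseteq> {z. (\<Sum>i\<in>UNIV. z $ i) = (\<Sum>i\<in>UNIV. x 0 $ i) \<and> (\<forall>i. u i (x 0 $ i) \<le> u i (z $ i))}"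
    using sum_x u_mono by auto
  thus ?thesis using bounded_level[OF concave usc not_pinf x0_dom A] bounded_subset by blast
qed

lemma CS_nonneg: "0 \<le> CS g u z"
proof -
  have "(\<Sum>i\<in>UNIV. Dfun g (u i) (z $ i) ((0::real^'j^'i) $ i)) \<le> CS g u z"
    unfolding CS_def by (rule Sup_upper) (auto intro!: exI[of _ 0])
  moreover have "0 \<le> (\<Sum>i\<in>UNIV. Dfun g (u i) (z $ i) ((0::real^'j^'i) $ i))"
    using D0 by (auto intro!: sum_nonneg)
  ultimately show ?thesis by (rule order_trans[rotated])
qed

lemma CS_upper: "(\<Sum>i\<in>UNIV. y $ i) = 0 \<Longrightarrow> (\<Sum>i\<in>UNIV. Dfun g (u i) (z $ i) (y $ i)) \<le> CS g u z"
  unfolding CS_def by (rule Sup_upper) auto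

lemma D_shift: "D (Suc t) i y \<le> D t i (xb t i + y) + ereal (- q t i)"
  unfolding Dfun_def[of g "u i" "x (Suc t) $ i"]
proof (rule Sup_least)
  fix e assume "e \<in> {ereal r |r. u i (x (Suc t) $ i) \<le> u i (x (Suc t) $ i + y - r *\<^sub>R g)}"
  then obtain r where r: "e = ereal r" "u i (x (Suc t) $ i) \<le> u i (x (Suc t) $ i + y - r *\<^sub>R g)" by blast
  have "x (Suc t) $ i + y - r *\<^sub>R g = x t $ i + (xb t i + y) - (r + q t i) *\<^sub>R g"
    unfolding upd by (simp add: algebra_simps)
  hence "u i (x t $ i) \<le> u i (x t $ i + (xb t i + y) - (r + q t i) *\<^sub>R g)"
    using r(2) u_step[of i t] by (metis order_trans)
  hence "ereal (r + q t i) \<le> D t i (xb t i + y)"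
    unfolding Dfun_def by (intro Sup_upper) blast
  thus "e \<le> D t i (xb t i + y) + ereal (- q t i)" unfolding r(1)
    by (cases "D t i (xb t i + y)") auto
qed

lemma CS_mono: "CS g u (x (Suc t)) \<le> CS g u (x t)"
  unfolding CS_def[of g u "x (Suc t)"]
proof (rule Sup_least)
  fix e assume "e \<in> {\<Sum>i\<in>UNIV. D (Suc t) i (y $ i) |y. (\<Sum>i\<in>UNIV. y $ i) = 0}"
  then obtain y where y: "e = (\<Sum>i\<in>UNIV. D (Suc t) i (y $ i))" "(\<Sum>i\<in>UNIV. y $ i) = 0" by blast
  have "e \<le> (\<Sum>i\<in>UNIV. D t i (xb t i + y $ i) + ereal (- q t i))"
    unfolding y(1) by (intro sum_mono D_shift)
  also have "\<dots> = (\<Sum>i\<in>UNIV. D t i (xb t i + y $ i)) + ereal (- (\<Sum>i\<in>UNIV. q t i))"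
    by (simp add: sum.distrib sum_negf)
  also have "(\<Sum>i\<in>UNIV. q t i) = 0"
    using xbar_feas[of "Suc t"] by (simp add: inner_sum_right[symmetric])
  also have "(\<Sum>i\<in>UNIV. D t i (xb t i + y $ i)) = (\<Sum>i\<in>UNIV. D t i ((xbar (Suc t) + y) $ i))" by simp
  also have "\<dots> \<le> CS g u (x t)"
    by (rule CS_upper) (use xbar_feas[of "Suc t"] y(2) in \<open>simp add: sum.distrib\<close>)
  finally show "e \<le> CS g u (x t)" by simp
qed

end

context DA begin

definition "sp t i = real_of_ereal (D t i (xb t i)) - q t i"
definition "CSr t = (\<Sum>i\<in>UNIV. sp t i)"
definition "Ur i t = real_of_ereal (u i (x t $ i))"

lemma Ur: "u i (x t $ i) = ereal (Ur i t)"
  using dom_x[of t i] not_pinf[of i "x t $ i"] unfolding Ur_def edom_def by (cases "u i (x t $ i)") auto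

lemma D_xb: "D t i (xb t i) = ereal (sp t i + q t i)"
proof -
  have "D t i (xb t i) < \<infinity>" by (rule D_fin[OF concave mono' not_pinf dom_x])
  moreover have "ereal (q t i) \<le> D t i (xb t i)" by (rule price_le)
  ultimately show ?thesis unfolding sp_def by (cases "D t i (xb t i)") auto
qed

lemma sp_nonneg: "0 \<le> sp t i"
  using price_le[of t i] unfolding D_xb by simp

lemma CS_eq: "CS g u (x t) = ereal (CSr t)"
proof -
  have "CS g u (x t) = (\<Sum>i\<in>UNIV. D t i (xb t i))"
  proof (rule antisym)
    show "CS g u (x t) \<le> (\<Sum>i\<in>UNIV. D t i (xb t i))"
      unfolding CS_def using xbar_opt[of "Suc t"] by (auto intro!: Sup_least)
    show "(\<Sum>i\<in>UNIV. D t i (xb t i)) \<le> CS g u (x t)"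
      by (rule CS_upper) (use xbar_feas[of "Suc t"] in simp)
  qed
  also have "\<dots> = ereal (CSr t + (\<Sum>i\<in>UNIV. q t i))"
    unfolding D_xb CSr_def by (simp add: sum.distrib)
  also have "(\<Sum>i\<in>UNIV. q t i) = 0"
    using xbar_feas[of "Suc t"] by (simp add: inner_sum_right[symmetric])
  finally show ?thesis by simp
qed

lemma CSr_nonneg: "0 \<le> CSr t"
  unfolding CSr_def by (intro sum_nonneg sp_nonneg)

lemma CSr_mono: "s \<le> t \<Longrightarrow> CSr t \<le> CSr s"
proof -
  have "CSr (Suc n) \<le> CSr n" for n using CS_mono[of n] unfolding CS_eq by simp
  thus "s \<le> t \<Longrightarrow> CSr t \<le> CSr s" using lift_Suc_antimono_le[of CSr] by blast
qed

lemma sp_le: "sp t i \<le> CSr 0"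
proof -
  have "sp t i \<le> CSr t" unfolding CSr_def by (rule member_le_sum) (auto intro: sp_nonneg)
  thus ?thesis using CSr_mono[of 0 t] by simp
qed

definition "w t i = x t $ i + xb t i - (sp t i + q t i) *\<^sub>R g"

lemma w_ge: "u i (x t $ i) \<le> u i (w t i)"
proof -
  have le: "ereal (sp t i + q t i) \<le> D t i (xb t i)" using D_xb[of i t] by simp
  show ?thesis using D_attain[OF usc mono' dom_x[of t i] le] unfolding w_def .
qed

lemma w_eq: "x (Suc t) $ i = w t i + sp t i *\<^sub>R g"
  unfolding w_def upd by (simp add: algebra_simps)

lemma w_dom: "w t i \<in> edom (u i)"
  using w_ge[of i t] dom_x[of t i] unfolding edom_def by (meson mem_Collect_eq order_less_le_trans)

lemma gain_step:
  assumes Bf: "\<forall>z\<in>cball 0 r. u i z + ereal (\<delta> * r) \<le> u i (z + r *\<^sub>R g)"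
    and wr: "norm (w t i) \<le> r" and spr: "sp t i \<le> r" and dpos: "0 < \<delta>"
  shows "\<delta> * sp t i \<le> Ur i (Suc t) - Ur i t"
proof -
  have "u i (w t i) + ereal (\<delta> * sp t i) \<le> u i (w t i + sp t i *\<^sub>R g)"
    by (rule gain[OF concave not_pinf Bf wr w_dom sp_nonneg spr dpos])
  hence "u i (x t $ i) + ereal (\<delta> * sp t i) \<le> u i (x (Suc t) $ i)"
    unfolding w_eq[symmetric] using w_ge[of i t] by (meson add_right_mono order_trans)
  thus ?thesis unfolding Ur by simp
qed

lemma rate_real:
  assumes Bf: "\<And>i. \<forall>z\<in>cball 0 r. u i z + ereal (\<delta> i * r) \<le> u i (z + r *\<^sub>R g)"
    and wr: "\<And>t i. norm (w t i) \<le> r" and spr: "\<And>t i. sp t i \<le> r" and dpos: "\<And>i. 0 < \<delta> i"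
  shows "real t * CSr t \<le> (\<Sum>i\<in>UNIV. (Ur i t - Ur i 0) / \<delta> i)"
proof -
  have "real t * CSr t = (\<Sum>s<t. CSr t)" by simp
  also have "\<dots> \<le> (\<Sum>s<t. CSr s)" by (intro sum_mono CSr_mono) simp
  also have "\<dots> = (\<Sum>i\<in>UNIV. \<Sum>s<t. sp s i)" unfolding CSr_def by (rule sum.swap)
  also have "\<dots> \<le> (\<Sum>i\<in>UNIV. \<Sum>s<t. (Ur i (Suc s) - Ur i s) / \<delta> i)"
  proof (intro sum_mono)
    fix i s
    have "\<delta> i * sp s i \<le> Ur i (Suc s) - Ur i s" by (rule gain_step[OF Bf wr spr dpos])
    thus "sp s i \<le> (Ur i (Suc s) - Ur i s) / \<delta> i" using dpos[of i] by (simp add: field_simps)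
  qed
  also have "\<dots> = (\<Sum>i\<in>UNIV. (Ur i t - Ur i 0) / \<delta> i)"
    by (simp add: sum_divide_distrib[symmetric] sum_lessThan_telescope)
  finally show ?thesis .
qed

end



context DA begin

lemma good_r: "\<exists>r>0. \<forall>t i. norm (w t i) \<le> r \<and> sp t i \<le> r"
proof -
  obtain M where M: "\<And>t. norm (x t) \<le> M" using bounded_x unfolding bounded_iff by blast
  define r where "r = M + CSr 0 * norm g + CSr 0 + 1"
  have M0: "0 \<le> M" using M[of 0] norm_ge_zero order_trans by blast
  have "norm (w t i) \<le> r \<and> sp t i \<le> r" for t i
  proof
    have "w t i = x (Suc t) $ i - sp t i *\<^sub>R g" using w_eq[of t i] by simp
    hence "norm (w t i) \<le> norm (x (Suc t) $ i) + norm (sp t i *\<^sub>R g)"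
      by (metis norm_triangle_ineq4)
    also have "norm (x (Suc t) $ i) \<le> M" using Finite_Cartesian_Product.norm_nth_le[of "x (Suc t)" i] M[of "Suc t"] by simp
    also have "norm (sp t i *\<^sub>R g) = sp t i * norm g" using sp_nonneg[of t i] by simp
    also have "sp t i * norm g \<le> CSr 0 * norm g" using sp_le[of t i] by (simp add: mult_right_mono)
    finally show "norm (w t i) \<le> r" unfolding r_def using CSr_nonneg[of 0] by simp
    show "sp t i \<le> r" using sp_le[of t i] M0 CSr_nonneg[of 0] unfolding r_def
      by (smt (verit) mult_nonneg_nonneg norm_ge_zero)
  qed
  moreover have "r > 0" unfolding r_def using M0 CSr_nonneg[of 0] by (smt (verit) mult_nonneg_nonneg norm_ge_zero)
  ultimately show ?thesis by blast
qed

lemma rate_ereal: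
  assumes Bf: "\<And>i. \<forall>z\<in>cball 0 r. u i (z + r *\<^sub>R g) \<ge> u i z + ereal (\<delta> i * r)"
    and wr: "\<And>t i. norm (w t i) \<le> r" and spr: "\<And>t i. sp t i \<le> r" and dpos: "\<And>i. 0 < \<delta> i"
    and t: "t \<ge> 1"
  shows "CS g u (x t) \<le> ereal (1 / real t) * (\<Sum>i\<in>UNIV. (u i (x t $ i) - u i (x 0 $ i)) / ereal (\<delta> i))"
proof -
  have "real t * CSr t \<le> (\<Sum>i\<in>UNIV. (Ur i t - Ur i 0) / \<delta> i)"
    by (rule rate_real[OF Bf wr spr dpos])
  hence le: "CSr t \<le> 1 / real t * (\<Sum>i\<in>UNIV. (Ur i t - Ur i 0) / \<delta> i)"
    using t by (simp add: field_simps)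
  have "(\<Sum>i\<in>UNIV. (u i (x t $ i) - u i (x 0 $ i)) / ereal (\<delta> i)) = ereal (\<Sum>i\<in>UNIV. (Ur i t - Ur i 0) / \<delta> i)"
    unfolding Ur using dpos by (simp add: less_imp_neq[symmetric])
  thus ?thesis using le unfolding CS_eq by simp
qed

lemma CS_lim: "(\<lambda>t. CS g u (x t)) \<longlonglongrightarrow> 0"
proof -
  obtain r where r: "r > 0" "\<And>t i. norm (w t i) \<le> r" "\<And>t i. sp t i \<le> r" using good_r by blast
  have "\<forall>i. \<exists>\<delta>>0. \<forall>z\<in>cball 0 r. u i (z + r *\<^sub>R g) \<ge> u i z + ereal (\<delta> * r)"
    using B[OF r(1)] by blast
  then obtain \<delta> where \<delta>: "\<And>i. \<delta> i > 0" "\<And>i. \<forall>z\<in>cball 0 r. u i (z + r *\<^sub>R g) \<ge> u i z + ereal (\<delta> i * r)"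
    by metis
  obtain M where M: "\<And>t. norm (x t) \<le> M" using bounded_x unfolding bounded_iff by blast
  have "\<exists>Mi. \<forall>z\<in>cball 0 M. u i z \<le> ereal Mi" for i by (rule usc_bdd[OF usc not_pinf compact_cball])
  then obtain Mi where Mi: "\<And>i. \<forall>z\<in>cball 0 M. u i z \<le> ereal (Mi i)" by metis
  have UrM: "Ur i t \<le> Mi i" for i t
  proof -
    have "x t $ i \<in> cball 0 M" using Finite_Cartesian_Product.norm_nth_le[of "x t" i] M[of t] by simp
    thus ?thesis using Mi[of i] Ur[of i t] by force
  qed
  define K where "K = (\<Sum>i\<in>UNIV. (Mi i - Ur i 0) / \<delta> i)"
  have bnd: "CSr t \<le> K * inverse (real t)" if "t \<ge> 1" for t
  proof -
    have "real t * CSr t \<le> (\<Sum>i\<in>UNIV. (Ur i t - Ur i 0) / \<delta> i)"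
      by (rule rate_real[OF _ r(2,3) \<delta>(1)]) (use \<delta>(2) in auto)
    also have "\<dots> \<le> K" unfolding K_def
      by (intro sum_mono divide_right_mono) (simp_all add: UrM less_imp_le[OF \<delta>(1)])
    finally show ?thesis using that by (simp add: field_simps)
  qed
  have "(\<lambda>t. K * inverse (real t)) \<longlonglongrightarrow> K * 0"
    by (intro tendsto_intros lim_inverse_n)
  hence lim: "(\<lambda>t. K * inverse (real t)) \<longlonglongrightarrow> 0" by simp
  have ev1: "eventually (\<lambda>t. 0 \<le> CSr t) sequentially" by (simp add: CSr_nonneg)
  have ev2: "eventually (\<lambda>t. CSr t \<le> K * inverse (real t)) sequentially"
    unfolding eventually_sequentially using bnd by blast
  have "CSr \<longlonglongrightarrow> 0" by (rule tendsto_sandwich[OF ev1 ev2 tendsto_const lim])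
  hence "(\<lambda>t. ereal (CSr t)) \<longlonglongrightarrow> ereal 0" by simp
  thus ?thesis unfolding CS_eq zero_ereal_def .
qed

end



context DA begin

lemma clus_u:
  assumes "strict_mono \<sigma>" "(x \<circ> \<sigma>) \<longlonglongrightarrow> xc"
  shows "u i (x t $ i) \<le> u i (xc $ i)"
proof -
  have lim: "(\<lambda>n. (x \<circ> \<sigma>) n $ i) \<longlonglongrightarrow> xc $ i" by (intro tendsto_intros assms(2))
  have "eventually (\<lambda>n. u i (x t $ i) \<le> u i ((x \<circ> \<sigma>) n $ i)) sequentially"
    unfolding eventually_sequentially
  proof (intro exI[of _ t] allI impI)
    fix n assume "t \<le> n"
    moreover have "n \<le> \<sigma> n" using assms(1) by (rule strict_mono_imp_increasing)
    ultimately show "u i (x t $ i) \<le> u i ((x \<circ> \<sigma>) n $ i)" by (simp add: u_mono)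
  qed
  thus ?thesis by (rule usc_seq[OF usc lim])
qed

lemma clus_dom:
  assumes "strict_mono \<sigma>" "(x \<circ> \<sigma>) \<longlonglongrightarrow> xc"
  shows "xc $ i \<in> edom (u i)"
  using clus_u[OF assms, of i 0] dom_x[of 0 i] unfolding edom_def
  by (meson mem_Collect_eq order_less_le_trans)

lemma clus_sum:
  assumes "strict_mono \<sigma>" "(x \<circ> \<sigma>) \<longlonglongrightarrow> xc"
  shows "(\<Sum>i\<in>UNIV. xc $ i) = (\<Sum>i\<in>UNIV. x 0 $ i)"
proof -
  have "(\<lambda>n. \<Sum>i\<in>UNIV. (x \<circ> \<sigma>) n $ i) \<longlonglongrightarrow> (\<Sum>i\<in>UNIV. xc $ i)" by (intro tendsto_intros assms(2))
  moreover have "(\<lambda>n. \<Sum>i\<in>UNIV. (x \<circ> \<sigma>) n $ i) = (\<lambda>n. \<Sum>i\<in>UNIV. x 0 $ i)"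
  proof (rule ext)
    fix n show "(\<Sum>i\<in>UNIV. (x \<circ> \<sigma>) n $ i) = (\<Sum>i\<in>UNIV. x 0 $ i)" using sum_x[of "\<sigma> n"] by simp
  qed
  ultimately show ?thesis using LIMSEQ_unique tendsto_const by metis
qed

lemma clus_choice:
  assumes "strict_mono \<sigma>" "(x \<circ> \<sigma>) \<longlonglongrightarrow> xc" and y: "(\<Sum>i\<in>UNIV. y $ i) = 0"
    and r: "\<And>i. u i (xc $ i) \<le> u i (xc $ i + y $ i - r i *\<^sub>R g)"
  shows "(\<Sum>i\<in>UNIV. r i) \<le> 0"
proof -
  have "ereal (\<Sum>i\<in>UNIV. r i) \<le> CS g u (x t)" for t
  proof -
    define v where "v = y + xc - x t"
    have vs: "(\<Sum>i\<in>UNIV. v $ i) = 0"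
      unfolding v_def using y clus_sum[OF assms(1,2)] sum_x[of t] by (simp add: sum.distrib sum_subtractf)
    have "ereal (r i) \<le> Dfun g (u i) (x t $ i) (v $ i)" for i
    proof -
      have "x t $ i + v $ i - r i *\<^sub>R g = xc $ i + y $ i - r i *\<^sub>R g" unfolding v_def by simp
      hence "u i (x t $ i) \<le> u i (x t $ i + v $ i - r i *\<^sub>R g)"
        using r[of i] clus_u[OF assms(1,2), of i t] by (metis order_trans)
      thus ?thesis unfolding Dfun_def by (intro Sup_upper) blast
    qed
    hence "(\<Sum>i\<in>UNIV. ereal (r i)) \<le> (\<Sum>i\<in>UNIV. Dfun g (u i) (x t $ i) (v $ i))" by (intro sum_mono)
    also have "\<dots> \<le> CS g u (x t)" by (rule CS_upper[OF vs])
    finally show ?thesis by simp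
  qed
  hence "ereal (\<Sum>i\<in>UNIV. r i) \<le> 0" by (intro LIMSEQ_le_const[OF CS_lim]) auto
  thus ?thesis by simp
qed

lemma clus_eq:
  assumes "strict_mono \<sigma>" "(x \<circ> \<sigma>) \<longlonglongrightarrow> xc"
  shows "CS g u xc = 0"
proof (rule antisym)
  show "0 \<le> CS g u xc" by (rule CS_nonneg)
  show "CS g u xc \<le> 0" unfolding CS_def
  proof (rule Sup_least)
    fix e assume "e \<in> {\<Sum>i\<in>UNIV. Dfun g (u i) (xc $ i) (y $ i) |y. (\<Sum>i\<in>UNIV. y $ i) = 0}"
    then obtain y where y: "e = (\<Sum>i\<in>UNIV. Dfun g (u i) (xc $ i) (y $ i))" "(\<Sum>i\<in>UNIV. y $ i) = 0" by blast
    define E where "E i = Dfun g (u i) (xc $ i) (y $ i)" for i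
    have Efin: "E i < \<infinity>" for i unfolding E_def by (rule D_fin[OF concave mono' not_pinf clus_dom[OF assms]])
    show "e \<le> 0"
    proof (rule ccontr)
      assume "\<not> e \<le> 0"
      hence epos: "0 < (\<Sum>i\<in>UNIV. E i)" unfolding y(1) E_def by simp
      have nm: "E k \<noteq> -\<infinity>" for k
      proof
        assume Ek: "E k = -\<infinity>"
        have "(\<Sum>i\<in>UNIV. E i) = E k + (\<Sum>i\<in>UNIV - {k}. E i)" by (simp add: sum.remove)
        moreover have "(\<Sum>i\<in>UNIV - {k}. E i) \<noteq> \<infinity>" using Efin by (simp add: sum_Pinfty)
        ultimately have "(\<Sum>i\<in>UNIV. E i) = -\<infinity>" using Ek by simp
        thus False using epos by simp
      qed
      define e' where "e' i = real_of_ereal (E i)" for i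
      have Ee: "E i = ereal (e' i)" for i using nm[of i] Efin[of i] unfolding e'_def by (cases "E i") auto
      define S where "S = (\<Sum>i\<in>UNIV. e' i)"
      have Spos: "0 < S" using epos unfolding S_def Ee by simp
      define c where "c = S / (2 * real (card (UNIV :: 'i set)))"
      have cardpos: "0 < real (card (UNIV :: 'i set))" by simp
      have "\<exists>ri. u i (xc $ i) \<le> u i (xc $ i + y $ i - ri *\<^sub>R g) \<and> e' i - c < ri" for i
      proof -
        have "ereal (e' i - c) < E i" unfolding Ee using Spos cardpos by (simp add: c_def)
        then obtain s where s: "s \<in> {ereal r | r. u i (xc $ i + y $ i - r *\<^sub>R g) \<ge> u i (xc $ i)}" "ereal (e' i - c) < s"
          unfolding E_def Dfun_def less_Sup_iff by blast
        thus ?thesis by auto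
      qed
      then obtain r where r: "\<And>i. u i (xc $ i) \<le> u i (xc $ i + y $ i - r i *\<^sub>R g)" "\<And>i. e' i - c < r i"
        by metis
      have "(\<Sum>i\<in>UNIV. e' i - c) < (\<Sum>i\<in>UNIV. r i)" by (rule sum_strict_mono) (auto intro: r(2))
      moreover have "(\<Sum>i\<in>UNIV. e' i - c) = S / 2"
        unfolding sum_subtractf S_def[symmetric] c_def using cardpos by simp
      moreover have "(\<Sum>i\<in>UNIV. r i) \<le> 0" by (rule clus_choice[OF assms y(2) r(1)])
      ultimately show False using Spos by simp
    qed
  qed
qed

end



context DA begin

lemma pareto:
  assumes H: "\<forall>i yi. (\<exists>y'\<in>edom (u i). u i yi > u i y') \<longrightarrow>
            (\<exists>e0>0. \<forall>e. 0 < e \<and> e < e0 \<longrightarrow> yi - e *\<^sub>R g \<in> edom (u i))"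
    and cl: "strict_mono \<sigma>" "(x \<circ> \<sigma>) \<longlonglongrightarrow> xc"
  shows "pareto_efficient u (x 0) xc"
  unfolding pareto_efficient_def feasible_def
proof (intro conjI notI)
  show "(\<Sum>i\<in>UNIV. xc $ i) = (\<Sum>i\<in>UNIV. x 0 $ i)" by (rule clus_sum[OF cl])
  assume "\<exists>x'. (\<Sum>i\<in>UNIV. x' $ i) = (\<Sum>i\<in>UNIV. x 0 $ i) \<and> (\<forall>i. u i (xc $ i) \<le> u i (x' $ i)) \<and> (\<exists>i. u i (xc $ i) < u i (x' $ i))"
  then obtain x' k where x': "(\<Sum>i\<in>UNIV. x' $ i) = (\<Sum>i\<in>UNIV. x 0 $ i)" "\<And>i. u i (xc $ i) \<le> u i (x' $ i)"
    "u k (xc $ k) < u k (x' $ k)" by blast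
  define y where "y = x' - xc"
  have ys: "(\<Sum>i\<in>UNIV. y $ i) = 0" unfolding y_def using x'(1) clus_sum[OF cl] by (simp add: sum_subtractf)
  have xy: "xc $ i + y $ i = x' $ i" for i unfolding y_def by simp
  have D0i: "0 \<le> Dfun g (u i) (xc $ i) (y $ i)" for i
  proof -
    have "ereal 0 \<le> Dfun g (u i) (xc $ i) (y $ i)" unfolding Dfun_def
      by (rule Sup_upper) (use x'(2)[of i] xy[of i] in auto)
    thus ?thesis by (simp add: zero_ereal_def)
  qed
  have domk: "xc $ k \<in> edom (u k)" by (rule clus_dom[OF cl])
  obtain Bk where Bk: "u k (xc $ k) = ereal Bk" using domk not_pinf[of k "xc $ k"] unfolding edom_def by (cases "u k (xc $ k)") auto
  obtain X where X: "u k (x' $ k) = ereal X" using x'(3) not_pinf[of k "x' $ k"] Bk by (cases "u k (x' $ k)") auto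
  have XB: "Bk < X" using x'(3) Bk X by simp
  obtain e0 where e0: "e0 > 0" "\<And>e. 0 < e \<and> e < e0 \<Longrightarrow> x' $ k - e *\<^sub>R g \<in> edom (u k)"
    using H domk x'(3) by blast
  define e1 where "e1 = e0 / 2"
  have e1: "0 < e1" "e1 < e0" unfolding e1_def using e0(1) by auto
  have w1: "x' $ k - e1 *\<^sub>R g \<in> edom (u k)" using e0(2) e1 by blast
  obtain W where W: "u k (x' $ k - e1 *\<^sub>R g) = ereal W" using w1 not_pinf[of k "x' $ k - e1 *\<^sub>R g"] unfolding edom_def
    by (cases "u k (x' $ k - e1 *\<^sub>R g)") auto
  obtain l where l: "0 < l" "l < 1" "Bk \<le> l * W + (1 - l) * X"
  proof (cases "Bk \<le> W")
    case True thus ?thesis using that[of "1/2"] XB by simp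
  next
    case False
    define l where "l = (X - Bk) / (X - W)"
    have "0 < l" "l < 1" unfolding l_def using False XB by (auto simp: field_simps)
    moreover have "l * W + (1 - l) * X = Bk"
    proof -
      have ne: "X - W \<noteq> 0" using False XB by simp
      have h: "l * (X - W) = X - Bk" unfolding l_def using ne by simp
      hence h2: "l * X - l * W = X - Bk" by (simp add: right_diff_distrib)
      have "(1 - l) * X = X - l * X" by (simp add: left_diff_distrib)
      thus ?thesis using h2 by linarith
    qed
    ultimately show ?thesis using that[of l] by simp
  qed
  have "ereal (l * W + (1 - l) * X) \<le> u k (l *\<^sub>R (x' $ k - e1 *\<^sub>R g) + (1 - l) *\<^sub>R x' $ k)"
    by (rule conc_real[OF concave W X l(1,2)])
  also have "l *\<^sub>R (x' $ k - e1 *\<^sub>R g) + (1 - l) *\<^sub>R x' $ k = xc $ k + y $ k - (l * e1) *\<^sub>R g"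
    unfolding xy by (simp add: algebra_simps)
  finally have "u k (xc $ k) \<le> u k (xc $ k + y $ k - (l * e1) *\<^sub>R g)" using l(3) Bk by (metis ereal_less_eq(3) order_trans)
  hence "ereal (l * e1) \<le> Dfun g (u k) (xc $ k) (y $ k)" unfolding Dfun_def by (intro Sup_upper) blast
  have "(\<Sum>i\<in>UNIV. (if i = k then ereal (l * e1) else 0)) \<le> (\<Sum>i\<in>UNIV. Dfun g (u i) (xc $ i) (y $ i))"
    by (intro sum_mono) (use \<open>ereal (l * e1) \<le> _\<close> D0i in auto)
  also have "\<dots> \<le> CS g u xc" by (rule CS_upper[OF ys])
  also have "\<dots> = 0" by (rule clus_eq[OF cl])
  finally have "ereal (l * e1) \<le> 0" by simp
  moreover have "0 < l * e1" using l(1) e1(1) by simp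
  ultimately show False by simp
qed

end

theorem theorem6p3:
  fixes g :: "real^'j::finite"
    and u :: "'i::finite \<Rightarrow> real^'j \<Rightarrow> ereal"
    and x xbar :: "nat \<Rightarrow> real^'j^'i"
    and p :: "nat \<Rightarrow> real^'j"
  assumes not_pinf: "\<And>i z. u i z \<noteq> \<infinity>"
    and usc: "\<And>i. usc (u i)"
    and concave: "\<And>i. ext_concave (u i)"
    and mono_g: "\<And>i z r. z \<in> edom (u i) \<Longrightarrow> r > 0 \<Longrightarrow> u i (z + r *\<^sub>R g) > u i z"
    and A: "\<And>y::real^'j^'i. (\<forall>i. recession (u i) (y $ i) \<ge> 0) \<Longrightarrow> (\<Sum>i\<in>UNIV. y $ i) = 0 \<Longrightarrow> y = 0"
    and B: "\<And>r i. r > 0 \<Longrightarrow> \<exists>\<delta>>0. \<forall>z\<in>cball 0 r.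
              u i (z + r *\<^sub>R g) \<ge> u i z + ereal (\<delta> * r)"
    and x0_dom: "\<And>i. x 0 $ i \<in> edom (u i)"
    and xbar_feas: "\<And>t. t \<ge> 1 \<Longrightarrow> (\<Sum>i\<in>UNIV. xbar t $ i) = 0"
    and xbar_opt: "\<And>t y. t \<ge> 1 \<Longrightarrow> (\<Sum>i\<in>UNIV. y $ i) = 0 \<Longrightarrow>
              (\<Sum>i\<in>UNIV. Dfun g (u i) (x (t - 1) $ i) (y $ i))
                \<le> (\<Sum>i\<in>UNIV. Dfun g (u i) (x (t - 1) $ i) (xbar t $ i))"
    and price: "\<And>t i. t \<ge> 1 \<Longrightarrow> p t \<in> superdiff (Dfun g (u i) (x (t - 1) $ i)) (xbar t $ i)"
    and update: "\<And>t i. t \<ge> 1 \<Longrightarrow>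
              x t $ i = x (t - 1) $ i + xbar t $ i - (p t \<bullet> xbar t $ i) *\<^sub>R g"
  shows "bounded (range x)
    \<and> (\<forall>t. CS g u (x (Suc t)) \<le> CS g u (x t))
    \<and> (\<lambda>t. CS g u (x t)) \<longlonglongrightarrow> 0
    \<and> (\<exists>r>0. \<forall>\<delta>::'i \<Rightarrow> real.
          (\<forall>i. \<delta> i > 0 \<and> (\<forall>z\<in>cball 0 r. u i (z + r *\<^sub>R g) \<ge> u i z + ereal (\<delta> i * r)))
          \<longrightarrow> (\<forall>t\<ge>1. CS g u (x t) \<le>
                 ereal (1 / real t) * (\<Sum>i\<in>UNIV. (u i (x t $ i) - u i (x 0 $ i)) / ereal (\<delta> i))))
    \<and> (\<forall>xb. (\<exists>\<sigma>. strict_mono \<sigma> \<and> (x \<circ> \<sigma>) \<longlonglongrightarrow> xb) \<longrightarrow>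
          DA_equilibrium g u xb \<and> indiv_rational u (x 0) xb)
    \<and> ((\<forall>i yi. (\<exists>y'\<in>edom (u i). u i yi > u i y') \<longrightarrow>
            (\<exists>e0>0. \<forall>e. 0 < e \<and> e < e0 \<longrightarrow> yi - e *\<^sub>R g \<in> edom (u i)))
       \<longrightarrow> (\<forall>xb. (\<exists>\<sigma>. strict_mono \<sigma> \<and> (x \<circ> \<sigma>) \<longlonglongrightarrow> xb) \<longrightarrow>
              pareto_efficient u (x 0) xb))"
proof -
  interpret DA g u x xbar p
    by unfold_locales (fact not_pinf usc concave mono_g A B x0_dom xbar_feas xbar_opt price update)+
  have rate: "\<exists>r>0. \<forall>\<delta>::'i \<Rightarrow> real.
          (\<forall>i. \<delta> i > 0 \<and> (\<forall>z\<in>cball 0 r. u i (z + r *\<^sub>R g) \<ge> u i z + ereal (\<delta> i * r)))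
          \<longrightarrow> (\<forall>t\<ge>1. CS g u (x t) \<le>
                 ereal (1 / real t) * (\<Sum>i\<in>UNIV. (u i (x t $ i) - u i (x 0 $ i)) / ereal (\<delta> i)))"
  proof -
    obtain r where r: "r > 0" "\<And>t i. norm (w t i) \<le> r" "\<And>t i. sp t i \<le> r" using good_r by blast
    show ?thesis
    proof (intro exI[of _ r] conjI allI impI)
      fix \<delta> :: "'i \<Rightarrow> real" and t :: nat
      assume d: "\<forall>i. \<delta> i > 0 \<and> (\<forall>z\<in>cball 0 r. u i (z + r *\<^sub>R g) \<ge> u i z + ereal (\<delta> i * r))"
        and t: "1 \<le> t"
      show "CS g u (x t) \<le> ereal (1 / real t) * (\<Sum>i\<in>UNIV. (u i (x t $ i) - u i (x 0 $ i)) / ereal (\<delta> i))"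
        by (rule rate_ereal[OF _ r(2,3) _ t]) (use d in auto)
    qed (rule r(1))
  qed
  have clus: "\<forall>xb. (\<exists>\<sigma>. strict_mono \<sigma> \<and> (x \<circ> \<sigma>) \<longlonglongrightarrow> xb) \<longrightarrow>
          DA_equilibrium g u xb \<and> indiv_rational u (x 0) xb"
    unfolding DA_equilibrium_def indiv_rational_def using clus_eq clus_u by blast
  have par: "(\<forall>i yi. (\<exists>y'\<in>edom (u i). u i yi > u i y') \<longrightarrow>
            (\<exists>e0>0. \<forall>e. 0 < e \<and> e < e0 \<longrightarrow> yi - e *\<^sub>R g \<in> edom (u i)))
       \<longrightarrow> (\<forall>xb. (\<exists>\<sigma>. strict_mono \<sigma> \<and> (x \<circ> \<sigma>) \<longlonglongrightarrow> xb) \<longrightarrow>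
              pareto_efficient u (x 0) xb)"
    using pareto by blast
  show ?thesis using bounded_x CS_mono CS_lim rate clus par by blast
qed

end
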